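(* Let $K$ be a parallelogram and $k\ge1$ an integer. Let $V(K)=\mathcal P_k(K)$, $\bm W(K)=[\mathcal P_k(K)]^2$, and $\bm M(\partial K)=\{\bm\mu:\bm\mu|_F=\bm n\times p_k\text{ for some }p_k\in\mathcal P_k(F),\text{ for each edge }F\subset\partial K\}$. Then $I_M(V(K)\times\bm W(K))=2$.
   Context: $\mathcal P_k$ denotes polynomials of total degree at most $k$. Conventions in 2D: $\nabla\times\bm v=-\partial_yv_1+\partial_xv_2$, $\nabla\times p=(\partial_yp,-\partial_xp)^T$, $\bm n\times\bm v=-n_2v_1+n_1v_2$, $\bm n\times p=(n_2p,-n_1p)^T$, $\bm n\times\bm w\times\bm n:=\bm w-(\bm w\cdot\bm n)\bm n$, $\bm n$ the unit outward normal. $I_M(V(K)\times\bm W(K)):=\dim\bm M(\partial K)-\dim\{\bm n\times v|_{\partial K}:v\in V(K),\nabla\times v=\bm0\}-\dim\{\bm n\times\bm w\times\bm n|_{\partial K}:\bm w\in\bm W(K),\nabla\times\bm w=0\}$. *)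

theory Defs
  imports "HOL-Analysis.Analysis" "HOL-Library.Function_Algebras"
    "HOL-Computational_Algebra.Polynomial"
begin

definition poly2 :: "nat \<Rightarrow> (real^2 \<Rightarrow> real) \<Rightarrow> bool" where
  "poly2 k p \<longleftrightarrow> (\<exists>c :: nat \<Rightarrow> nat \<Rightarrow> real.
      \<forall>x. p x = (\<Sum>i\<le>k. \<Sum>j\<le>k - i. c i j * (x$1)^i * (x$2)^j))"

definition pdx :: "(real^2 \<Rightarrow> real) \<Rightarrow> real^2 \<Rightarrow> real" where
  "pdx p x = deriv (\<lambda>s. p (x + s *\<^sub>R axis 1 1)) 0"
definition pdy :: "(real^2 \<Rightarrow> real) \<Rightarrow> real^2 \<Rightarrow> real" where
  "pdy p x = deriv (\<lambda>s. p (x + s *\<^sub>R axis 2 1)) 0"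

definition curl_s :: "(real^2 \<Rightarrow> real) \<Rightarrow> real^2 \<Rightarrow> real^2" where
  "curl_s p x = vector [pdy p x, - pdx p x]"
definition curl_v :: "(real^2 \<Rightarrow> real^2) \<Rightarrow> real^2 \<Rightarrow> real" where
  "curl_v w x = - pdy (\<lambda>y. w y $ 1) x + pdx (\<lambda>y. w y $ 2) x"

text \<open>n x p = (n2 p, - n1 p) for scalar p; n x w x n = w - (w.n) n.\<close>
definition ncross_s :: "real^2 \<Rightarrow> real \<Rightarrow> real^2" where
  "ncross_s n p = vector [n$2 * p, - (n$1 * p)]"
definition tang :: "real^2 \<Rightarrow> real^2 \<Rightarrow> real^2" where
  "tang n w = w - (w \<bullet> n) *\<^sub>R n"

definition pgram :: "real^2 \<Rightarrow> real^2 \<Rightarrow> real^2 \<Rightarrow> (real^2) set" where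
  "pgram a u v = {a + s *\<^sub>R u + t *\<^sub>R v | s t. s \<in> {0..1} \<and> t \<in> {0..1}}"

definition pg_vertex :: "real^2 \<Rightarrow> real^2 \<Rightarrow> real^2 \<Rightarrow> nat \<Rightarrow> real^2" where
  "pg_vertex a u v i = (if i mod 4 = 0 then a else if i mod 4 = 1 then a + u
      else if i mod 4 = 2 then a + u + v else a + v)"

definition pg_edge :: "real^2 \<Rightarrow> real^2 \<Rightarrow> real^2 \<Rightarrow> nat \<Rightarrow> real \<Rightarrow> real^2" where
  "pg_edge a u v i t = pg_vertex a u v i + t *\<^sub>R (pg_vertex a u v (Suc i) - pg_vertex a u v i)"

definition pg_normal :: "real^2 \<Rightarrow> real^2 \<Rightarrow> real^2 \<Rightarrow> nat \<Rightarrow> real^2" where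
  "pg_normal a u v i = (THE n. norm n = 1
      \<and> n \<bullet> (pg_vertex a u v (Suc i) - pg_vertex a u v i) = 0
      \<and> n \<bullet> ((a + (1/2) *\<^sub>R (u + v)) - pg_vertex a u v i) < 0)"

text \<open>Functions on the boundary are represented edgewise: mu i t is the value at the point
  pg_edge a u v i t of edge i (i < 4, t in [0,1]); they vanish off this index set.\<close>
type_synonym bfield = "nat \<Rightarrow> real \<Rightarrow> real^2"

definition bscale :: "real \<Rightarrow> bfield \<Rightarrow> bfield" where
  "bscale c f = (\<lambda>i t. c *\<^sub>R f i t)"

definition bdim :: "bfield set \<Rightarrow> nat" where
  "bdim S = vector_space.dim bscale S"

definition on_bdry :: "nat \<Rightarrow> real \<Rightarrow> bool" where
  "on_bdry i t \<longleftrightarrow> i < 4 \<and> t \<in> {0..1}"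

definition Mspace :: "nat \<Rightarrow> real^2 \<Rightarrow> real^2 \<Rightarrow> real^2 \<Rightarrow> bfield set" where
  "Mspace k a u v = {mu. (\<forall>i t. \<not> on_bdry i t \<longrightarrow> mu i t = 0) \<and>
      (\<forall>i<4. \<exists>q :: real poly. degree q \<le> k \<and>
          (\<forall>t\<in>{0..1}. mu i t = ncross_s (pg_normal a u v i) (poly q t)))}"

definition trace_s :: "real^2 \<Rightarrow> real^2 \<Rightarrow> real^2 \<Rightarrow> (real^2 \<Rightarrow> real) \<Rightarrow> bfield" where
  "trace_s a u v p = (\<lambda>i t. if on_bdry i t
      then ncross_s (pg_normal a u v i) (p (pg_edge a u v i t)) else 0)"
definition trace_t :: "real^2 \<Rightarrow> real^2 \<Rightarrow> real^2 \<Rightarrow> (real^2 \<Rightarrow> real^2) \<Rightarrow> bfield" where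
  "trace_t a u v w = (\<lambda>i t. if on_bdry i t
      then tang (pg_normal a u v i) (w (pg_edge a u v i t)) else 0)"

definition I_M :: "nat \<Rightarrow> real^2 \<Rightarrow> real^2 \<Rightarrow> real^2 \<Rightarrow> int" where
  "I_M k a u v =
     int (bdim (Mspace k a u v))
   - int (bdim {trace_s a u v p | p. poly2 k p \<and> (\<forall>x\<in>pgram a u v. curl_s p x = 0)})
   - int (bdim {trace_t a u v w | w. poly2 k (\<lambda>x. w x $ 1) \<and> poly2 k (\<lambda>x. w x $ 2)
                 \<and> (\<forall>x\<in>pgram a u v. curl_v w x = 0)})"

end

theory Submission
  imports Defs
begin

lemma inner2: "(x::real^2) \<bullet> y = x$1*y$1 + x$2*y$2"
  by (simp add: inner_vec_def sum_2)
lemma vec2_eq: "(x::real^2) = y \<longleftrightarrow> x$1 = y$1 \<and> x$2 = y$2"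
  by (simp add: vec_eq_iff forall_2)
lemma norm2: "norm (x::real^2) = sqrt ((x$1)^2 + (x$2)^2)"
  by (simp add: norm_eq_sqrt_inner inner2 power2_eq_square)

definition det2 :: "real^2 \<Rightarrow> real^2 \<Rightarrow> real" where "det2 u v = u$1* v$2 - u$2* v$1"

lemma det_nz: assumes "\<not> collinear {0, u, v}" shows "det2 u v \<noteq> 0"
proof
  assume d: "det2 u v = 0"
  have u0: "u \<noteq> 0" and nc: "\<not> (\<exists>c. v = c *\<^sub>R u)" using assms by (auto simp: collinear_lemma)
  show False
  proof (cases "u$1 = 0")
    case True
    with u0 have "u$2 \<noteq> 0" by (auto simp: vec2_eq)
    then have "v = (v$2/u$2) *\<^sub>R u" using d True by (auto simp: vec2_eq det2_def field_simps)
    with nc show False by blast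
  next
    case False
    then have "v = (v$1/u$1) *\<^sub>R u" using d by (auto simp: vec2_eq det2_def field_simps)
    with nc show False by blast
  qed
qed

lemma a1: fixes n1 n2 d1 d2 :: real assumes "n1^2+n2^2 = 1" "n1*d1+n2*d2 = 0"
  shows "d1 = - (n1*d2 - n2*d1) * n2" "d2 = (n1*d2 - n2*d1) * n1"
  using assms by algebra+
lemma a2: fixes x1 x2 e1 e2 :: real assumes "e1^2+e2^2 \<noteq> 0" "x1*e1+x2*e2 = 0"
  shows "x1 = ((x1 * (-e2) + x2*e1)/(e1^2+e2^2)) * (-e2)" "x2 = ((x1 * (-e2) + x2*e1)/(e1^2+e2^2)) * e1"
  using assms by (simp_all add: field_simps; algebra)+
lemma a3: fixes w1 w2 n1 n2 mu :: real assumes "n1^2+n2^2 = 1" "mu \<noteq> 0"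
  shows "w1 - (w1*n1+w2*n2)*n1 = ((w1*(-mu*n2) + w2*(mu*n1))/mu^2) * (-mu*n2)"
        "w2 - (w1*n1+w2*n2)*n2 = ((w1*(-mu*n2) + w2*(mu*n1))/mu^2) * (mu*n1)"
  using assms by (simp_all add: field_simps power2_eq_square; algebra)+
lemma a4: fixes x N :: real assumes "N > 0" "x \<noteq> 0" shows "- sgn x / N * x < 0"
proof -
  have "sgn x * x = \<bar>x\<bar>" by (simp add: abs_sgn mult.commute)
  then have "- sgn x / N * x = - \<bar>x\<bar> / N" by (simp add: field_simps)
  then show ?thesis using assms by simp
qed

definition perp :: "real^2 \<Rightarrow> real^2" where "perp e = vector [- e$2, e$1]"

lemma normal_unique_ex:
  fixes e r :: "real^2"
  assumes rp: "r \<bullet> perp e \<noteq> 0"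
  shows "\<exists>!n. norm n = 1 \<and> n \<bullet> e = 0 \<and> n \<bullet> r < 0"
proof -
  let ?p = "perp e"
  have pe: "?p \<bullet> e = 0" by (simp add: perp_def inner2)
  have p0: "?p \<noteq> 0" using rp by auto
  have np: "norm ?p > 0" using p0 by simp
  define n where "n = (- sgn (r \<bullet> ?p) / norm ?p) *\<^sub>R ?p"
  have n1: "norm n = 1" using np rp by (simp add: n_def abs_sgn)
  have n2: "n \<bullet> e = 0" using pe by (simp add: n_def)
  have n3: "n \<bullet> r < 0" using a4[OF np rp]
    by (simp add: n_def inner_commute)
  have uniq: "m = n" if m: "norm m = 1" "m \<bullet> e = 0" "m \<bullet> r < 0" for m
  proof -
    have gen: "x = ((x \<bullet> ?p)/(?p \<bullet> ?p)) *\<^sub>R ?p" if "x \<bullet> e = 0" for x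
    proof -
      have pp: "?p \<bullet> ?p = (e$1)^2 + (e$2)^2" by (simp add: perp_def inner2 power2_eq_square)
      have pp0: "(e$1)^2 + (e$2)^2 \<noteq> 0" using p0 pp by auto
      have xe: "x$1*e$1 + x$2*e$2 = 0" using that by (simp add: inner2)
      show ?thesis using a2[OF pp0 xe] unfolding vec2_eq pp
        by (simp add: perp_def inner2)
    qed
    define a where "a = (m \<bullet> ?p)/(?p \<bullet> ?p)"
    define b where "b = (n \<bullet> ?p)/(?p \<bullet> ?p)"
    have ma: "m = a *\<^sub>R ?p" using gen[OF m(2)] a_def by simp
    have nb: "n = b *\<^sub>R ?p" using gen[OF n2] b_def by simp
    have "\<bar>a\<bar> * norm ?p = 1" using m(1) ma by simp
    moreover have "\<bar>b\<bar> * norm ?p = 1" using n1 nb by simp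
    ultimately have ab: "\<bar>a\<bar> = \<bar>b\<bar>" using np by (metis mult_right_cancel less_irrefl)
    have "a * (?p \<bullet> r) < 0" using m(3) ma by simp
    moreover have "b * (?p \<bullet> r) < 0" using n3 nb by simp
    ultimately have "a = b" using ab
      by (smt (verit, best) mult_minus_left)
    then show ?thesis using ma nb by simp
  qed
  show ?thesis using n1 n2 n3 uniq by blast
qed

lemma vertex_simps:
  "pg_vertex a u v 0 = a" "pg_vertex a u v 1 = a + u" "pg_vertex a u v 2 = a + u + v"
  "pg_vertex a u v 3 = a + v" "pg_vertex a u v 4 = a"
  by (simp_all add: pg_vertex_def)

lemma cases4: assumes "i < (4::nat)" obtains "i = 0" | "i = 1" | "i = 2" | "i = 3"
  using assms by linarith

lemma edge_vec: assumes "i < 4"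
  shows "pg_vertex a u v (Suc i) - pg_vertex a u v i =
    (if i = 0 then u else if i = 1 then v else if i = 2 then - u else - v)"
  using assms by (cases rule: cases4) (simp_all add: pg_vertex_def)


lemma rp_det: assumes "i < 4"
  shows "((a + (1/2) *\<^sub>R (u + v)) - pg_vertex a u v i) \<bullet> perp (pg_vertex a u v (Suc i) - pg_vertex a u v i) = det2 u v / 2"
  using assms by (cases rule: cases4) (simp_all add: pg_vertex_def inner2 perp_def det2_def algebra_simps)
definition dvec :: "real^2 \<Rightarrow> real^2 \<Rightarrow> nat \<Rightarrow> real^2" where
  "dvec u v i = (if i mod 2 = 0 then u else v)"

lemma pg_normal_props:
  assumes nc: "\<not> collinear {0, u, v}" and i: "i < 4"
  shows "norm (pg_normal a u v i) = 1 \<and> pg_normal a u v i \<bullet> dvec u v i = 0"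
proof -
  have d: "det2 u v \<noteq> 0" using det_nz[OF nc] .
  let ?e = "pg_vertex a u v (Suc i) - pg_vertex a u v i"
  let ?r = "(a + (1/2) *\<^sub>R (u + v)) - pg_vertex a u v i"
  have rp: "?r \<bullet> perp ?e \<noteq> 0"
    unfolding rp_det[OF i] using d by simp
  have P: "norm (pg_normal a u v i) = 1 \<and> pg_normal a u v i \<bullet> ?e = 0"
    unfolding pg_normal_def using theI'[OF normal_unique_ex[OF rp]] by blast
  have "?e = dvec u v i \<or> ?e = - dvec u v i"
    unfolding edge_vec[OF i] using i by (cases rule: cases4) (auto simp: dvec_def)
  then show ?thesis using P by (auto simp: inner_minus_right)
qed

lemma dvec_nz: assumes nc: "\<not> collinear {0, u, v}" shows "dvec u v i \<noteq> 0"
  using det_nz[OF nc] by (auto simp: dvec_def det2_def)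

lemma tang_eq:
  fixes n d w :: "real^2"
  assumes "norm n = 1" "n \<bullet> d = 0" "d \<noteq> 0"
  shows "tang n w = ((w \<bullet> d) / (d \<bullet> d)) *\<^sub>R d"
proof -
  have n: "(n$1)^2 + (n$2)^2 = 1" using assms(1) by (simp add: norm2)
  have nd: "n$1*d$1 + n$2*d$2 = 0" using assms(2) by (simp add: inner2)
  define mu where "mu = n$1*d$2 - n$2*d$1"
  have d1: "d$1 = - mu * n$2" and d2: "d$2 = mu * n$1" unfolding mu_def using a1[OF n nd] by simp_all
  have dd: "d \<bullet> d = mu^2" using d1 d2 n by (simp add: inner2 power2_eq_square) algebra
  have mu0: "mu \<noteq> 0" using assms(3) d1 d2 by (auto simp: vec2_eq)
  have c1: "w$1 - (w$1*n$1+w$2*n$2)*n$1 = ((w$1*(-mu*n$2) + w$2*(mu*n$1))/mu^2) * (-mu*n$2)"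
    using n mu0 by (simp add: field_simps power2_eq_square; algebra)
  have c2: "w$2 - (w$1*n$1+w$2*n$2)*n$2 = ((w$1*(-mu*n$2) + w$2*(mu*n$1))/mu^2) * (mu*n$1)"
    using n mu0 by (simp add: field_simps power2_eq_square; algebra)
  have wd: "w \<bullet> d = w$1*(-mu*n$2) + w$2*(mu*n$1)" by (simp add: inner2 d1 d2)
  have wn: "w \<bullet> n = w$1*n$1+w$2*n$2" by (simp add: inner2)
  have e1: "(tang n w)$1 = (((w \<bullet> d) / (d \<bullet> d)) *\<^sub>R d)$1"
    unfolding tang_def vector_minus_component vector_scaleR_component real_scaleR_def wn wd dd d1 c1 ..
  have e2: "(tang n w)$2 = (((w \<bullet> d) / (d \<bullet> d)) *\<^sub>R d)$2"
    unfolding tang_def vector_minus_component vector_scaleR_component real_scaleR_def wn wd dd d2 c2 ..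
  show ?thesis using e1 e2 vec2_eq by blast
qed

lemma edge_simps:
  "pg_edge a u v 0 t = a + t *\<^sub>R u"
  "pg_edge a u v 1 t = a + u + t *\<^sub>R v"
  "pg_edge a u v 2 t = a + (1 - t) *\<^sub>R u + v"
  "pg_edge a u v 3 t = a + (1 - t) *\<^sub>R v"
  by (simp_all add: pg_edge_def pg_vertex_def scaleR_diff_left)

lemma edge_in_pgram:
  assumes "i < 4" "t \<in> {0..1}" shows "pg_edge a u v i t \<in> pgram a u v"
proof -
  have "\<exists>s r. pg_edge a u v i t = a + s *\<^sub>R u + r *\<^sub>R v \<and> s \<in> {0..1} \<and> r \<in> {0..1}"
    using assms(1)
  proof (cases rule: cases4)
    case 1 show ?thesis apply (rule exI[where x=t], rule exI[where x=0]) using 1 assms(2) edge_simps(1)[of a u v t] by (simp add: )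
  next
    case 2 show ?thesis apply (rule exI[where x=1], rule exI[where x=t]) using 2 assms(2) edge_simps(2)[of a u v t] by (simp add: )
  next
    case 3 show ?thesis apply (rule exI[where x="1-t"], rule exI[where x=1]) using 3 assms(2) edge_simps(3)[of a u v t] by simp
  next
    case 4 show ?thesis apply (rule exI[where x=0], rule exI[where x="1-t"]) using 4 assms(2) edge_simps(4)[of a u v t] by (simp add: )
  qed
  then show ?thesis unfolding pgram_def by blast
qed

fun evalL :: "(real \<times> nat \<times> nat) list \<Rightarrow> real \<Rightarrow> real \<Rightarrow> real" where
  "evalL [] x y = 0"
| "evalL ((c,i,j)#ms) x y = c * x^i * y^j + evalL ms x y"

definition degL :: "nat \<Rightarrow> (real \<times> nat \<times> nat) list \<Rightarrow> bool" where
  "degL K ms \<longleftrightarrow> (\<forall>m\<in>set ms. fst (snd m) + snd (snd m) \<le> K)"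

lemma list3_induct: "P [] \<Longrightarrow> (\<And>c i j ms. P ms \<Longrightarrow> P ((c,i,j)#ms)) \<Longrightarrow> P ms"
  by (induction ms) auto

lemma degL_simps[simp]: "degL K []" "degL K ((c,i,j)#ms) \<longleftrightarrow> i + j \<le> K \<and> degL K ms"
  "degL K (ms @ ms') \<longleftrightarrow> degL K ms \<and> degL K ms'"
  by (auto simp: degL_def)

lemma degL_mono: "degL K ms \<Longrightarrow> K \<le> K' \<Longrightarrow> degL K' ms" by (force simp: degL_def)

lemma evalL_append[simp]: "evalL (ms @ ms') x y = evalL ms x y + evalL ms' x y"
  by (induction ms rule: list3_induct) auto

definition LP :: "nat \<Rightarrow> (real \<Rightarrow> real \<Rightarrow> real) \<Rightarrow> bool" where
  "LP K f \<longleftrightarrow> (\<exists>ms. degL K ms \<and> (\<forall>x y. f x y = evalL ms x y))"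

lemma LP_mono: "LP K f \<Longrightarrow> K \<le> K' \<Longrightarrow> LP K' f" by (meson LP_def degL_mono)
lemma LP_evalL: "degL K ms \<Longrightarrow> LP K (evalL ms)" by (auto simp: LP_def)
lemma LP_monomial: "i + j \<le> K \<Longrightarrow> LP K (\<lambda>x y. c * x^i * y^j)"
  unfolding LP_def by (rule exI[of _ "[(c,i,j)]"]) simp
lemma LP_zero: "LP K (\<lambda>x y. 0)" unfolding LP_def by (rule exI[of _ "[]"]) simp
lemma LP_const: "LP K (\<lambda>x y. c)" using LP_monomial[of 0 0 K c] by simp
lemma LP_x: "1 \<le> K \<Longrightarrow> LP K (\<lambda>x y. x)" using LP_monomial[of 1 0 K 1] by simp
lemma LP_y: "1 \<le> K \<Longrightarrow> LP K (\<lambda>x y. y)" using LP_monomial[of 0 1 K 1] by simp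

lemma LP_add: assumes "LP K f" "LP K g" shows "LP K (\<lambda>x y. f x y + g x y)"
proof -
  obtain m1 where m1: "degL K m1" "\<forall>x y. f x y = evalL m1 x y" using assms(1) by (auto simp: LP_def)
  obtain m2 where m2: "degL K m2" "\<forall>x y. g x y = evalL m2 x y" using assms(2) by (auto simp: LP_def)
  show ?thesis unfolding LP_def by (rule exI[of _ "m1 @ m2"]) (simp add: m1 m2)
qed

fun prodL :: "(real \<times> nat \<times> nat) list \<Rightarrow> (real \<times> nat \<times> nat) list \<Rightarrow> (real \<times> nat \<times> nat) list" where
  "prodL [] ms = []"
| "prodL ((c,i,j)#ms1) ms = map (\<lambda>(d,k,l). (c*d, i+k, j+l)) ms @ prodL ms1 ms"

lemma evalL_map_mul: "evalL (map (\<lambda>(d,k,l). (c*d, i+k, j+l)) ms) x y = c * x^i * y^j * evalL ms x y"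
  by (induction ms rule: list3_induct) (auto simp: power_add algebra_simps)

lemma evalL_prodL: "evalL (prodL m1 m2) x y = evalL m1 x y * evalL m2 x y"
  by (induction m1 m2 rule: prodL.induct) (auto simp: evalL_map_mul algebra_simps)

lemma degL_map_mul: "degL L ms \<Longrightarrow> i + j \<le> K \<Longrightarrow> degL (K + L) (map (\<lambda>(d,k,l). (c*d, i+k, j+l)) ms)"
  by (induction ms rule: list3_induct) auto

lemma degL_prodL: "degL K m1 \<Longrightarrow> degL L m2 \<Longrightarrow> degL (K + L) (prodL m1 m2)"
  by (induction m1 m2 rule: prodL.induct) (auto simp: degL_map_mul)

lemma LP_mult: assumes "LP K f" "LP L g" shows "LP (K + L) (\<lambda>x y. f x y * g x y)"
proof -
  obtain m1 where m1: "degL K m1" "\<forall>x y. f x y = evalL m1 x y" using assms(1) by (auto simp: LP_def)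
  obtain m2 where m2: "degL L m2" "\<forall>x y. g x y = evalL m2 x y" using assms(2) by (auto simp: LP_def)
  show ?thesis unfolding LP_def
    by (rule exI[of _ "prodL m1 m2"]) (simp add: m1 m2 evalL_prodL degL_prodL)
qed

lemma LP_scale: "LP K f \<Longrightarrow> LP K (\<lambda>x y. c * f x y)"
  using LP_mult[OF LP_const[of 0 c]] by simp

lemma LP_pow: "LP K f \<Longrightarrow> LP (K * n) (\<lambda>x y. f x y ^ n)"
proof (induction n)
  case 0 then show ?case using LP_const[of 0 1] by simp
next
  case (Suc n)
  have "LP (K + K * n) (\<lambda>x y. f x y * f x y ^ n)" by (rule LP_mult[OF Suc.prems Suc.IH[OF Suc.prems]])
  then show ?case by (simp add: algebra_simps)
qed

lemma LP_sum: "finite A \<Longrightarrow> (\<And>a. a \<in> A \<Longrightarrow> LP K (f a)) \<Longrightarrow> LP K (\<lambda>x y. \<Sum>a\<in>A. f a x y)"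
proof (induction A rule: finite_induct)
  case empty then show ?case using LP_zero by simp
next
  case (insert a A)
  then show ?case using LP_add[of K "f a" "\<lambda>x y. \<Sum>a\<in>A. f a x y"] by simp
qed

lemma LP_subst_aux: "degL K ms \<Longrightarrow> LP 1 p \<Longrightarrow> LP 1 q \<Longrightarrow> LP K (\<lambda>x y. evalL ms (p x y) (q x y))"
proof (induction ms rule: list3_induct)
  case 1 then show ?case using LP_zero by simp
next
  case (2 c i j ms)
  have a: "LP (0 + 1 * i) (\<lambda>x y. c * p x y ^ i)" by (rule LP_mult[OF LP_const LP_pow[OF 2(3)]])
  have b: "LP ((0 + 1 * i) + 1 * j) (\<lambda>x y. c * p x y ^ i * q x y ^ j)" by (rule LP_mult[OF a LP_pow[OF 2(4)]])
  have b': "LP K (\<lambda>x y. c * p x y ^ i * q x y ^ j)" using LP_mono[OF b] 2(2) by simp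
  have r: "LP K (\<lambda>x y. evalL ms (p x y) (q x y))" using 2 by simp
  show ?case using LP_add[OF b' r] by simp
qed

lemma LP_subst: "LP K g \<Longrightarrow> LP 1 p \<Longrightarrow> LP 1 q \<Longrightarrow> LP K (\<lambda>x y. g (p x y) (q x y))"
proof -
  assume g: "LP K g" and pq: "LP 1 p" "LP 1 q"
  obtain m where m: "degL K m" "\<forall>x y. g x y = evalL m x y" using g by (auto simp: LP_def)
  show ?thesis using LP_subst_aux[OF m(1) pq] m(2) by simp
qed

lemma LP_affine: "LP 1 (\<lambda>x y. c0 + c1 * x + c2 * y)"
proof -
  have "LP 1 (\<lambda>x y. c0 + c1 * x)" using LP_add[OF LP_const LP_scale[OF LP_x]] by simp
  then show ?thesis using LP_add[OF _ LP_scale[OF LP_y]] by simp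
qed

definition dX :: "(real \<times> nat \<times> nat) list \<Rightarrow> (real \<times> nat \<times> nat) list" where
  "dX ms = map (\<lambda>(c,i,j). if i = 0 then (0,0,0) else (c * real i, i - 1, j)) ms"
definition dY :: "(real \<times> nat \<times> nat) list \<Rightarrow> (real \<times> nat \<times> nat) list" where
  "dY ms = map (\<lambda>(c,i,j). if j = 0 then (0,0,0) else (c * real j, i, j - 1)) ms"

lemma dX_simps[simp]: "dX [] = []" "dX ((c,i,j)#ms) = (if i = 0 then (0,0,0) else (c * real i, i - 1, j)) # dX ms"
  "dX (ms @ ms') = dX ms @ dX ms'"
  by (simp_all add: dX_def)
lemma dY_simps[simp]: "dY [] = []" "dY ((c,i,j)#ms) = (if j = 0 then (0,0,0) else (c * real j, i, j - 1)) # dY ms"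
  "dY (ms @ ms') = dY ms @ dY ms'"
  by (simp_all add: dY_def)

lemma evalL_dX_Cons[simp]: "evalL (dX ((c,i,j)#ms)) x y = c * real i * x^(i-1) * y^j + evalL (dX ms) x y"
  by simp
lemma evalL_dY_Cons[simp]: "evalL (dY ((c,i,j)#ms)) x y = c * real j * x^i * y^(j-1) + evalL (dY ms) x y"
  by simp

lemma degL_dX: "degL (Suc K) ms \<Longrightarrow> degL K (dX ms)"
  by (induction ms rule: list3_induct) auto
lemma degL_dY: "degL (Suc K) ms \<Longrightarrow> degL K (dY ms)"
  by (induction ms rule: list3_induct) auto

lemma evalL_dXY: "evalL (dY (dX ms)) x y = evalL (dX (dY ms)) x y"
  by (induction ms rule: list3_induct) auto

lemma DERIV_mono_dir:
  "((\<lambda>h. c * (x0 + h*d1)^i * (y0 + h*d2)^j) has_real_derivative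
     (d1 * (c * real i * (x0 + h*d1)^(i-1) * (y0 + h*d2)^j) + d2 * (c * real j * (x0 + h*d1)^i * (y0 + h*d2)^(j-1)))) (at h)"
  by (auto intro!: derivative_eq_intros simp: algebra_simps)

lemma DERIV_evalL_dir:
  "((\<lambda>h. evalL ms (x0 + h*d1) (y0 + h*d2)) has_real_derivative
     (d1 * evalL (dX ms) (x0 + h*d1) (y0 + h*d2) + d2 * evalL (dY ms) (x0 + h*d1) (y0 + h*d2))) (at h)"
proof (induction ms rule: list3_induct)
  case 1 then show ?case by simp
next
  case (2 c i j ms)
  let ?X = "x0 + h*d1" and ?Y = "y0 + h*d2"
  have D: "((\<lambda>h. c * (x0 + h*d1)^i * (y0 + h*d2)^j + evalL ms (x0 + h*d1) (y0 + h*d2)) has_real_derivative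
     ((d1 * (c * real i * ?X^(i-1) * ?Y^j) + d2 * (c * real j * ?X^i * ?Y^(j-1))) +
      (d1 * evalL (dX ms) ?X ?Y + d2 * evalL (dY ms) ?X ?Y))) (at h)"
    by (rule DERIV_add[OF DERIV_mono_dir 2])
  have e: "d1 * evalL (dX ((c,i,j)#ms)) ?X ?Y + d2 * evalL (dY ((c,i,j)#ms)) ?X ?Y =
     (d1 * (c * real i * ?X^(i-1) * ?Y^j) + d2 * (c * real j * ?X^i * ?Y^(j-1))) +
      (d1 * evalL (dX ms) ?X ?Y + d2 * evalL (dY ms) ?X ?Y)"
    by (simp only: evalL_dX_Cons evalL_dY_Cons ring_distribs add_ac)
  show ?case unfolding evalL.simps(2) e by (rule D)
qed

lemma DERIV_evalL_x: "((\<lambda>x. evalL ms x y) has_real_derivative evalL (dX ms) x y) (at x)"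
  using DERIV_evalL_dir[of ms 0 1 y 0 x] by simp
lemma DERIV_evalL_y: "((\<lambda>y. evalL ms x y) has_real_derivative evalL (dY ms) x y) (at y)"
  using DERIV_evalL_dir[of ms x 0 0 1 y] by simp

lemma LP_tri: "LP k (\<lambda>x y. \<Sum>i\<le>k. \<Sum>j\<le>k-i. c i j * x^i * y^j)"
  by (intro LP_sum LP_monomial) auto

lemma poly2_LP: assumes "poly2 k p" shows "\<exists>ms. degL k ms \<and> (\<forall>x. p x = evalL ms (x$1) (x$2))"
proof -
  obtain c where c: "\<forall>x. p x = (\<Sum>i\<le>k. \<Sum>j\<le>k - i. c i j * (x$1)^i * (x$2)^j)"
    using assms by (auto simp: poly2_def)
  obtain ms where "degL k ms" "\<forall>x y. (\<Sum>i\<le>k. \<Sum>j\<le>k-i. c i j * x^i * y^j) = evalL ms x y"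
    using LP_tri[of k c] by (auto simp: LP_def)
  then show ?thesis using c by auto
qed

lemma delta_sum2: fixes d x y :: real assumes "i0 + j0 \<le> k"
  shows "(\<Sum>i\<le>k. \<Sum>j\<le>k-i. (if i = i0 \<and> j = j0 then d else 0) * x^i * y^j) = d * x^i0 * y^j0"
proof -
  have "(\<Sum>j\<le>k-i. (if i = i0 \<and> j = j0 then d else 0) * x^i * y^j) = (if i = i0 then d * x^i0 * y^j0 else 0)" for i
  proof (cases "i = i0")
    case True
    have "(\<Sum>j\<le>k-i. (if i = i0 \<and> j = j0 then d else 0) * x^i * y^j) = (\<Sum>j\<le>k-i. if j = j0 then d * x^i0 * y^j0 else 0)"
      using True by (intro sum.cong) auto
    also have "\<dots> = d * x^i0 * y^j0" using True assms by (simp add: sum.delta')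
    finally show ?thesis using True by simp
  qed simp
  then have "(\<Sum>i\<le>k. \<Sum>j\<le>k-i. (if i = i0 \<and> j = j0 then d else 0) * x^i * y^j) = (\<Sum>i\<le>k. if i = i0 then d * x^i0 * y^j0 else 0)"
    by (intro sum.cong) auto
  also have "\<dots> = d * x^i0 * y^j0" using assms by (simp add: sum.delta')
  finally show ?thesis .
qed

lemma degL_tri: "degL k ms \<Longrightarrow> \<exists>c. \<forall>x y. evalL ms x y = (\<Sum>i\<le>k. \<Sum>j\<le>k-i. c i j * x^i * y^j)"
proof (induction ms rule: list3_induct)
  case 1 then show ?case by (intro exI[of _ "\<lambda>i j. 0"]) simp
next
  case (2 d i0 j0 ms)
  then obtain c where c: "\<forall>x y. evalL ms x y = (\<Sum>i\<le>k. \<Sum>j\<le>k-i. c i j * x^i * y^j)" by auto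
  have ij: "i0 + j0 \<le> k" using 2 by simp
  show ?case
  proof (intro exI[of _ "\<lambda>i j. c i j + (if i = i0 \<and> j = j0 then d else 0)"] allI)
    fix x y :: real
    have "(\<Sum>i\<le>k. \<Sum>j\<le>k-i. (c i j + (if i = i0 \<and> j = j0 then d else 0)) * x^i * y^j)
      = (\<Sum>i\<le>k. \<Sum>j\<le>k-i. c i j * x^i * y^j) + (\<Sum>i\<le>k. \<Sum>j\<le>k-i. (if i = i0 \<and> j = j0 then d else 0) * x^i * y^j)"
      by (simp add: sum.distrib distrib_right)
    then show "evalL ((d, i0, j0) # ms) x y = (\<Sum>i\<le>k. \<Sum>j\<le>k-i. (c i j + (if i = i0 \<and> j = j0 then d else 0)) * x^i * y^j)"
      using c delta_sum2[OF ij, of d x y] by simp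
  qed
qed

lemma LP_poly2: assumes "LP k g" shows "poly2 k (\<lambda>x. g (x$1) (x$2))"
proof -
  obtain ms where ms: "degL k ms" "\<forall>x y. g x y = evalL ms x y" using assms by (auto simp: LP_def)
  obtain c where "\<forall>x y. evalL ms x y = (\<Sum>i\<le>k. \<Sum>j\<le>k-i. c i j * x^i * y^j)" using degL_tri[OF ms(1)] by auto
  then show ?thesis using ms(2) unfolding poly2_def by (intro exI[of _ c]) auto
qed

lemma axis_comps: "(axis 1 1 :: real^2)$1 = 1" "(axis 1 1 :: real^2)$2 = 0"
  "(axis 2 1 :: real^2)$1 = 0" "(axis 2 1 :: real^2)$2 = 1"
  by (simp_all add: axis_def)

lemma pdx_evalL: assumes "\<And>x. p x = evalL ms (x$1) (x$2)"
  shows "pdx p x = evalL (dX ms) (x$1) (x$2)"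
proof -
  have f: "(\<lambda>s. p (x + s *\<^sub>R axis 1 1)) = (\<lambda>s. evalL ms (x$1 + s*1) (x$2 + s*0))"
    using assms by (simp add: axis_comps)
  show ?thesis unfolding pdx_def f using DERIV_imp_deriv[OF DERIV_evalL_dir[of ms "x$1" 1 "x$2" 0 0]] by simp
qed

lemma pdy_evalL: assumes "\<And>x. p x = evalL ms (x$1) (x$2)"
  shows "pdy p x = evalL (dY ms) (x$1) (x$2)"
proof -
  have f: "(\<lambda>s. p (x + s *\<^sub>R axis 2 1)) = (\<lambda>s. evalL ms (x$1 + s*0) (x$2 + s*1))"
    using assms by (simp add: axis_comps)
  show ?thesis unfolding pdy_def f using DERIV_imp_deriv[OF DERIV_evalL_dir[of ms "x$1" 0 "x$2" 1 0]] by simp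
qed

lemma pgram_seg: assumes "y \<in> pgram a u v" "h \<in> {0..1}" shows "a + h *\<^sub>R (y - a) \<in> pgram a u v"
proof -
  obtain s t where st: "y = a + s *\<^sub>R u + t *\<^sub>R v" "s \<in> {0..1}" "t \<in> {0..1}" using assms(1) by (auto simp: pgram_def)
  have "a + h *\<^sub>R (y - a) = a + (h * s) *\<^sub>R u + (h * t) *\<^sub>R v" using st by (simp add: algebra_simps)
  moreover have "h * s \<in> {0..1}" "h * t \<in> {0..1}" using st assms(2) by (auto intro: mult_le_one)
  ultimately show ?thesis unfolding pgram_def by blast
qed

lemma curl_s_const:
  assumes p: "poly2 k p" and c: "\<forall>x\<in>pgram a u v. curl_s p x = 0" and y: "y \<in> pgram a u v"
  shows "p y = p a"
proof -
  obtain ms where ms: "degL k ms" "\<forall>x. p x = evalL ms (x$1) (x$2)" using poly2_LP[OF p] by auto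
  have z: "evalL (dX ms) (x$1) (x$2) = 0 \<and> evalL (dY ms) (x$1) (x$2) = 0" if "x \<in> pgram a u v" for x
  proof -
    have "curl_s p x = 0" using c that by auto
    then have "pdx p x = 0" "pdy p x = 0" unfolding curl_s_def by (simp_all add: vec2_eq)
    then show ?thesis using pdx_evalL[of p ms x] pdy_evalL[of p ms x] ms(2) by simp
  qed
  define d where "d = y - a"
  define g where "g h = evalL ms (a$1 + h * d$1) (a$2 + h * d$2)" for h
  have gp: "g h = p (a + h *\<^sub>R d)" for h using ms(2) by (simp add: g_def)
  have D: "(g has_real_derivative 0) (at h)" if "h \<in> {0..1}" for h
  proof -
    have "a + h *\<^sub>R d \<in> pgram a u v" using pgram_seg[OF y that] by (simp add: d_def)
    then have "evalL (dX ms) (a$1 + h * d$1) (a$2 + h * d$2) = 0 \<and> evalL (dY ms) (a$1 + h * d$1) (a$2 + h * d$2) = 0"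
      using z[of "a + h *\<^sub>R d"] by simp
    then show ?thesis using DERIV_evalL_dir[of ms "a$1" "d$1" "a$2" "d$2" h] unfolding g_def by simp
  qed
  have cont: "continuous_on {0..1} g"
  proof -
    have "\<forall>h\<in>{0..1}. isCont g h" using D DERIV_isCont by blast
    then show ?thesis by (rule continuous_at_imp_continuous_on)
  qed
  have "g 1 = g 0" by (rule DERIV_isconst_end[OF _ cont]) (use D in auto)
  then show ?thesis using gp[of 1] gp[of 0] by (simp add: d_def)
qed

lemma inner_comp: "(x::real^2) \<bullet> e = e$1 * x$1 + e$2 * x$2" by (simp add: inner2 mult.commute)

lemma DERIV_wdot:
  fixes w :: "real^2 \<Rightarrow> real^2" and p d e :: "real^2"
  assumes w1: "\<And>x. w x $ 1 = evalL M1 (x$1) (x$2)" and w2: "\<And>x. w x $ 2 = evalL M2 (x$1) (x$2)"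
  shows "((\<lambda>h. w (p + h *\<^sub>R d) \<bullet> e) has_real_derivative
     (e$1 * (d$1 * evalL (dX M1) ((p + h *\<^sub>R d)$1) ((p + h *\<^sub>R d)$2) + d$2 * evalL (dY M1) ((p + h *\<^sub>R d)$1) ((p + h *\<^sub>R d)$2)) +
      e$2 * (d$1 * evalL (dX M2) ((p + h *\<^sub>R d)$1) ((p + h *\<^sub>R d)$2) + d$2 * evalL (dY M2) ((p + h *\<^sub>R d)$1) ((p + h *\<^sub>R d)$2)))) (at h)"
proof -
  have f: "(\<lambda>h. w (p + h *\<^sub>R d) \<bullet> e) = (\<lambda>h. e$1 * evalL M1 (p$1 + h*d$1) (p$2 + h*d$2) + e$2 * evalL M2 (p$1 + h*d$1) (p$2 + h*d$2))"
    by (simp add: inner_comp w1 w2)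
  show ?thesis unfolding f
    using DERIV_add[OF DERIV_cmult[OF DERIV_evalL_dir[of M1 "p$1" "d$1" "p$2" "d$2" h], of "e$1"]
                      DERIV_cmult[OF DERIV_evalL_dir[of M2 "p$1" "d$1" "p$2" "d$2" h], of "e$2"]] by simp
qed

definition PAf :: "(real \<times> nat \<times> nat) list \<Rightarrow> (real \<times> nat \<times> nat) list" where
  "PAf A = map (\<lambda>(c,i,j). (c * 0^j / real (Suc i), Suc i, 0)) A"
definition PBf :: "(real \<times> nat \<times> nat) list \<Rightarrow> (real \<times> nat \<times> nat) list" where
  "PBf B = map (\<lambda>(c,i,j). (c / real (Suc j), i, Suc j)) B"

lemma PAf_simps[simp]: "PAf [] = []" "PAf ((c,i,j)#ms) = (c * 0^j / real (Suc i), Suc i, 0) # PAf ms"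
  by (simp_all add: PAf_def)
lemma PBf_simps[simp]: "PBf [] = []" "PBf ((c,i,j)#ms) = (c / real (Suc j), i, Suc j) # PBf ms"
  by (simp_all add: PBf_def)

lemma L1: "evalL (dY (PAf A)) x y = 0" by (induction A rule: list3_induct) auto
lemma L2: "evalL (dX (PAf A)) x y = evalL A x 0" by (induction A rule: list3_induct) auto
lemma L3: "evalL (dY (PBf B)) x y = evalL B x y" by (induction B rule: list3_induct) auto
lemma L4: "evalL (dX (PBf B)) x 0 = 0" by (induction B rule: list3_induct) auto
lemma L5: "evalL (dY (dX (PBf B))) x y = evalL (dX B) x y" by (induction B rule: list3_induct) auto
lemma degPA: "degL k A \<Longrightarrow> degL (Suc k) (PAf A)" by (induction A rule: list3_induct) auto
lemma degPB: "degL k B \<Longrightarrow> degL (Suc k) (PBf B)" by (induction B rule: list3_induct) auto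

lemma potential:
  assumes P1: "poly2 k (\<lambda>x. w x $ 1)" and P2: "poly2 k (\<lambda>x. w x $ 2)"
    and C: "\<forall>x\<in>pgram a u v. curl_v w x = 0"
  shows "\<exists>\<Phi>. degL (Suc k) \<Phi> \<and> (\<forall>\<sigma>\<in>{0..1}. \<forall>\<tau>\<in>{0..1}.
     w (a + \<sigma> *\<^sub>R u + \<tau> *\<^sub>R v) \<bullet> u = evalL (dX \<Phi>) \<sigma> \<tau> \<and> w (a + \<sigma> *\<^sub>R u + \<tau> *\<^sub>R v) \<bullet> v = evalL (dY \<Phi>) \<sigma> \<tau>)"
proof -
  obtain M1 where M1: "degL k M1" "\<forall>x. w x $ 1 = evalL M1 (x$1) (x$2)" using poly2_LP[OF P1] by auto
  obtain M2 where M2: "degL k M2" "\<forall>x. w x $ 2 = evalL M2 (x$1) (x$2)" using poly2_LP[OF P2] by auto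
  have LPW: "LP k (\<lambda>\<sigma> \<tau>. w (a + \<sigma> *\<^sub>R u + \<tau> *\<^sub>R v) \<bullet> e)" for e
  proof -
    have eq: "(\<lambda>\<sigma> \<tau>. w (a + \<sigma> *\<^sub>R u + \<tau> *\<^sub>R v) \<bullet> e) = (\<lambda>\<sigma> \<tau>. e$1 * evalL M1 (a$1 + u$1*\<sigma> + v$1*\<tau>) (a$2 + u$2*\<sigma> + v$2*\<tau>)
       + e$2 * evalL M2 (a$1 + u$1*\<sigma> + v$1*\<tau>) (a$2 + u$2*\<sigma> + v$2*\<tau>))"
      by (simp add: fun_eq_iff inner_comp M1(2) M2(2) algebra_simps)
    show ?thesis unfolding eq
      by (intro LP_add LP_scale LP_subst[OF LP_evalL] LP_affine M1(1) M2(1))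
  qed
  obtain A where A: "degL k A" "\<forall>\<sigma> \<tau>. w (a + \<sigma> *\<^sub>R u + \<tau> *\<^sub>R v) \<bullet> u = evalL A \<sigma> \<tau>"
    using LPW[of u] by (auto simp: LP_def)
  obtain B where B: "degL k B" "\<forall>\<sigma> \<tau>. w (a + \<sigma> *\<^sub>R u + \<tau> *\<^sub>R v) \<bullet> v = evalL B \<sigma> \<tau>"
    using LPW[of v] by (auto simp: LP_def)
  have curlrel: "evalL (dX B) \<sigma> \<tau> = evalL (dY A) \<sigma> \<tau>" if st: "\<sigma> \<in> {0..1}" "\<tau> \<in> {0..1}" for \<sigma> \<tau>
  proof -
    define x where "x = a + \<sigma> *\<^sub>R u + \<tau> *\<^sub>R v"
    have xin: "x \<in> pgram a u v" using st unfolding pgram_def x_def by blast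
    have c0: "curl_v w x = 0" using C xin by auto
    define E1x where "E1x = evalL (dX M1) (x$1) (x$2)"
    define E1y where "E1y = evalL (dY M1) (x$1) (x$2)"
    define E2x where "E2x = evalL (dX M2) (x$1) (x$2)"
    define E2y where "E2y = evalL (dY M2) (x$1) (x$2)"
    have px: "pdx (\<lambda>y. w y $ 2) x = E2x" unfolding E2x_def by (rule pdx_evalL) (use M2 in auto)
    have py: "pdy (\<lambda>y. w y $ 1) x = E1y" unfolding E1y_def by (rule pdy_evalL) (use M1 in auto)
    have E: "E2x = E1y" using c0 px py unfolding curl_v_def by simp
    have fA: "(\<lambda>t. evalL A \<sigma> t) = (\<lambda>h. w ((a + \<sigma> *\<^sub>R u) + h *\<^sub>R v) \<bullet> u)" using A(2) by simp
    have dA: "((\<lambda>t. evalL A \<sigma> t) has_real_derivative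
        (u$1 * (v$1 * E1x + v$2 * E1y) + u$2 * (v$1 * E2x + v$2 * E2y))) (at \<tau>)"
      unfolding fA E1x_def E1y_def E2x_def E2y_def x_def
      by (rule DERIV_wdot) (use M1 M2 in auto)
    have fB: "(\<lambda>s. evalL B s \<tau>) = (\<lambda>h. w ((a + \<tau> *\<^sub>R v) + h *\<^sub>R u) \<bullet> v)"
    proof (rule ext)
      fix h
      have e: "a + \<tau> *\<^sub>R v + h *\<^sub>R u = a + h *\<^sub>R u + \<tau> *\<^sub>R v" by (simp add: algebra_simps)
      show "evalL B h \<tau> = w ((a + \<tau> *\<^sub>R v) + h *\<^sub>R u) \<bullet> v" unfolding e using B(2) by simp
    qed
    have xB: "a + \<tau> *\<^sub>R v + \<sigma> *\<^sub>R u = x" unfolding x_def by (simp add: algebra_simps)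
    have dB: "((\<lambda>s. evalL B s \<tau>) has_real_derivative
        (v$1 * (u$1 * E1x + u$2 * E1y) + v$2 * (u$1 * E2x + u$2 * E2y))) (at \<sigma>)"
      unfolding fB E1x_def E1y_def E2x_def E2y_def xB[symmetric]
      by (rule DERIV_wdot) (use M1 M2 in auto)
    have "evalL (dY A) \<sigma> \<tau> = u$1 * (v$1 * E1x + v$2 * E1y) + u$2 * (v$1 * E2x + v$2 * E2y)"
      by (rule DERIV_unique[OF DERIV_evalL_y dA])
    moreover have "evalL (dX B) \<sigma> \<tau> = v$1 * (u$1 * E1x + u$2 * E1y) + v$2 * (u$1 * E2x + u$2 * E2y)"
      by (rule DERIV_unique[OF DERIV_evalL_x dB])
    ultimately show ?thesis using E by (simp add: algebra_simps)
  qed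
  have F2: "evalL (dX (PBf B)) \<sigma> \<tau> = evalL A \<sigma> \<tau> - evalL A \<sigma> 0" if st: "\<sigma> \<in> {0..1}" "\<tau> \<in> {0..1}" for \<sigma> \<tau>
  proof -
    define g where "g t = evalL (dX (PBf B)) \<sigma> t - evalL A \<sigma> t + evalL A \<sigma> 0" for t
    have D: "(g has_real_derivative 0) (at t)" if "t \<in> {0..1}" for t
    proof -
      have "(g has_real_derivative (evalL (dY (dX (PBf B))) \<sigma> t - evalL (dY A) \<sigma> t + 0)) (at t)"
        unfolding g_def by (intro DERIV_add DERIV_diff DERIV_evalL_y DERIV_const)
      then show ?thesis using curlrel[OF st(1) that] by (simp add: L5)
    qed
    have "g \<tau> = g 0"
    proof (cases "\<tau> = 0")
      case False
      then have t0: "0 < \<tau>" using st by auto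
      have "\<forall>h\<in>{0..\<tau>}. isCont g h" using D DERIV_isCont st by force
      then have cont: "continuous_on {0..\<tau>} g" by (rule continuous_at_imp_continuous_on)
      show ?thesis by (rule DERIV_isconst_end[OF t0 cont]) (use D st in auto)
    qed simp
    then show ?thesis unfolding g_def using L4 by simp
  qed
  show ?thesis
  proof (intro exI[of _ "PAf A @ PBf B"] conjI ballI)
    show "degL (Suc k) (PAf A @ PBf B)" using degPA[OF A(1)] degPB[OF B(1)] by simp
    fix \<sigma> \<tau> :: real assume st: "\<sigma> \<in> {0..1}" "\<tau> \<in> {0..1}"
    show "w (a + \<sigma> *\<^sub>R u + \<tau> *\<^sub>R v) \<bullet> u = evalL (dX (PAf A @ PBf B)) \<sigma> \<tau>"
      using F2[OF st] A(2) by (simp add: L2)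
    show "w (a + \<sigma> *\<^sub>R u + \<tau> *\<^sub>R v) \<bullet> v = evalL (dY (PAf A @ PBf B)) \<sigma> \<tau>"
      using B(2) by (simp add: L1 L3)
  qed
qed

interpretation bv: vector_space bscale
  by unfold_locales (auto simp: bscale_def fun_eq_iff scaleR_add_right scaleR_add_left)

definition Tv :: "real^2 \<Rightarrow> real^2 \<Rightarrow> nat \<Rightarrow> real^2" where
  "Tv u v i = (1 / (dvec u v i \<bullet> dvec u v i)) *\<^sub>R dvec u v i"
definition mkT :: "real^2 \<Rightarrow> real^2 \<Rightarrow> (nat \<Rightarrow> real \<Rightarrow> real) \<Rightarrow> bfield" where
  "mkT u v f = (\<lambda>i t. if on_bdry i t then f i t *\<^sub>R Tv u v i else 0)"
definition bd :: "(real \<times> nat \<times> nat) list \<Rightarrow> nat \<Rightarrow> real \<Rightarrow> real" where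
  "bd \<Phi> i t = (if i = 0 then evalL (dX \<Phi>) t 0 else if i = 1 then evalL (dY \<Phi>) 1 t
     else if i = 2 then evalL (dX \<Phi>) (1-t) 1 else evalL (dY \<Phi>) 0 (1-t))"
definition G :: "real^2 \<Rightarrow> real^2 \<Rightarrow> nat \<Rightarrow> nat \<Rightarrow> bfield" where
  "G u v m n = mkT u v (bd [(1,m,n)])"

lemma trace_mkT:
  assumes nc: "\<not> collinear {0, u, v}"
    and F: "\<forall>\<sigma>\<in>{0..1}. \<forall>\<tau>\<in>{0..1}. w (a + \<sigma> *\<^sub>R u + \<tau> *\<^sub>R v) \<bullet> u = evalL (dX \<Phi>) \<sigma> \<tau>
              \<and> w (a + \<sigma> *\<^sub>R u + \<tau> *\<^sub>R v) \<bullet> v = evalL (dY \<Phi>) \<sigma> \<tau>"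
  shows "trace_t a u v w = mkT u v (bd \<Phi>)"
proof (intro ext)
  fix i t
  show "trace_t a u v w i t = mkT u v (bd \<Phi>) i t"
  proof (cases "on_bdry i t")
    case False then show ?thesis by (simp add: trace_t_def mkT_def)
  next
    case True
    then have i: "i < 4" and t: "t \<in> {0..1}" by (auto simp: on_bdry_def)
    have N: "norm (pg_normal a u v i) = 1" "pg_normal a u v i \<bullet> dvec u v i = 0"
      using pg_normal_props[OF nc i] by auto
    let ?W = "w (pg_edge a u v i t)"
    have T: "tang (pg_normal a u v i) ?W = (?W \<bullet> dvec u v i) *\<^sub>R Tv u v i"
      using tang_eq[OF N dvec_nz[OF nc]] by (simp add: Tv_def)
    have t': "1 - t \<in> {0..1}" using t by auto
    have E: "?W \<bullet> dvec u v i = bd \<Phi> i t"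
      using i
    proof (cases rule: cases4)
      case 1
      have e: "pg_edge a u v i t = a + t *\<^sub>R u + 0 *\<^sub>R v" using 1 by (simp add: edge_simps)
      show ?thesis using F[rule_format, of t 0] t 1 unfolding e by (simp add: dvec_def bd_def)
    next
      case 2
      have e: "pg_edge a u v i t = a + 1 *\<^sub>R u + t *\<^sub>R v" using 2 edge_simps(2)[of a u v t] by simp
      show ?thesis using F[rule_format, of 1 t] t 2 unfolding e by (simp add: dvec_def bd_def)
    next
      case 3
      have e: "pg_edge a u v i t = a + (1-t) *\<^sub>R u + 1 *\<^sub>R v" using 3 edge_simps(3)[of a u v t] by simp
      show ?thesis using F[rule_format, of "1-t" 1] t' 3 unfolding e by (simp add: dvec_def bd_def)
    next
      case 4
      have e: "pg_edge a u v i t = a + 0 *\<^sub>R u + (1-t) *\<^sub>R v" using 4 edge_simps(4)[of a u v t] by simp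
      show ?thesis using F[rule_format, of 0 "1-t"] t' 4 unfolding e by (simp add: dvec_def bd_def)
    qed
    show ?thesis using True T E by (simp add: trace_t_def mkT_def)
  qed
qed

lemma bd_Nil: "bd [] i t = 0" by (simp add: bd_def)
lemma bd_Cons: "bd ((c,m,n)#\<Phi>) i t = c * bd [(1,m,n)] i t + bd \<Phi> i t"
  by (simp add: bd_def del: dX_simps(2) dY_simps(2))

lemma mkT_lin: "mkT u v (\<lambda>i t. c * f i t + g i t) = bscale c (mkT u v f) + mkT u v g"
  by (simp add: fun_eq_iff mkT_def bscale_def scaleR_add_left)

lemma mkT_zero: "mkT u v (\<lambda>i t. 0) = 0"
  by (simp add: fun_eq_iff mkT_def)

lemma mkT_span: "degL K \<Phi> \<Longrightarrow> mkT u v (bd \<Phi>) \<in> bv.span {G u v m n | m n. m + n \<le> K}"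
proof (induction \<Phi> rule: list3_induct)
  case 1
  have "bd [] = (\<lambda>i t. 0)" by (simp add: fun_eq_iff bd_Nil)
  then have z: "mkT u v (bd []) = 0" using mkT_zero by simp
  show ?case unfolding z by (rule bv.span_zero)
next
  case (2 c m n \<Phi>)
  have e: "mkT u v (bd ((c,m,n)#\<Phi>)) = bscale c (G u v m n) + mkT u v (bd \<Phi>)"
    unfolding G_def bd_Cons[of c m n \<Phi>, abs_def] by (rule mkT_lin)
  have "G u v m n \<in> {G u v m n | m n. m + n \<le> K}" using 2 by auto
  then have a: "bscale c (G u v m n) \<in> bv.span {G u v m n | m n. m + n \<le> K}"
    by (intro bv.span_scale bv.span_base)
  have b: "mkT u v (bd \<Phi>) \<in> bv.span {G u v m n | m n. m + n \<le> K}" using 2 by simp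
  show ?case unfolding e by (rule bv.span_add[OF a b])
qed

lemma dual_basis: assumes nc: "\<not> collinear {0, u, v}"
  shows "\<exists>\<alpha> \<beta> :: real^2. \<alpha> \<bullet> u = 1 \<and> \<alpha> \<bullet> v = 0 \<and> \<beta> \<bullet> u = 0 \<and> \<beta> \<bullet> v = 1"
proof -
  have d: "det2 u v \<noteq> 0" using det_nz[OF nc] .
  let ?p = "vector [v$2, - v$1] :: real^2"
  let ?q = "vector [- u$2, u$1] :: real^2"
  have 1: "?p \<bullet> u = det2 u v" "?p \<bullet> v = 0" "?q \<bullet> u = 0" "?q \<bullet> v = det2 u v"
    by (simp_all add: inner2 det2_def algebra_simps)
  have "((1 / det2 u v) *\<^sub>R ?p) \<bullet> u = 1" "((1 / det2 u v) *\<^sub>R ?p) \<bullet> v = 0"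
       "((1 / det2 u v) *\<^sub>R ?q) \<bullet> u = 0" "((1 / det2 u v) *\<^sub>R ?q) \<bullet> v = 1"
    using d by (simp_all only: inner_scaleR_left 1) simp_all
  then show ?thesis by blast
qed

lemma inner_shift: "(\<alpha>::real^2) \<bullet> (x + s *\<^sub>R e - a) = \<alpha> \<bullet> (x - a) + s * (\<alpha> \<bullet> e)"
  by (simp add: inner_diff_right inner_add_right)

lemma deriv_comb:
  fixes f :: "real^2 \<Rightarrow> real" and \<alpha> \<beta> x e a :: "real^2"
  assumes "\<And>y. f y = c1 * evalL P (\<alpha> \<bullet> (y - a)) (\<beta> \<bullet> (y - a)) + c2 * evalL Q (\<alpha> \<bullet> (y - a)) (\<beta> \<bullet> (y - a))"
  shows "deriv (\<lambda>s. f (x + s *\<^sub>R e)) 0 =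
     c1 * ((\<alpha> \<bullet> e) * evalL (dX P) (\<alpha> \<bullet> (x - a)) (\<beta> \<bullet> (x - a)) + (\<beta> \<bullet> e) * evalL (dY P) (\<alpha> \<bullet> (x - a)) (\<beta> \<bullet> (x - a)))
   + c2 * ((\<alpha> \<bullet> e) * evalL (dX Q) (\<alpha> \<bullet> (x - a)) (\<beta> \<bullet> (x - a)) + (\<beta> \<bullet> e) * evalL (dY Q) (\<alpha> \<bullet> (x - a)) (\<beta> \<bullet> (x - a)))"
proof -
  have f: "(\<lambda>s. f (x + s *\<^sub>R e)) = (\<lambda>s. c1 * evalL P (\<alpha> \<bullet> (x - a) + s * (\<alpha> \<bullet> e)) (\<beta> \<bullet> (x - a) + s * (\<beta> \<bullet> e))
        + c2 * evalL Q (\<alpha> \<bullet> (x - a) + s * (\<alpha> \<bullet> e)) (\<beta> \<bullet> (x - a) + s * (\<beta> \<bullet> e)))"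
    by (simp add: fun_eq_iff assms inner_shift)
  show ?thesis unfolding f
    using DERIV_imp_deriv[OF DERIV_add[OF DERIV_cmult[OF DERIV_evalL_dir[of P "\<alpha> \<bullet> (x - a)" "\<alpha> \<bullet> e" "\<beta> \<bullet> (x - a)" "\<beta> \<bullet> e" 0], of c1]
                      DERIV_cmult[OF DERIV_evalL_dir[of Q "\<alpha> \<bullet> (x - a)" "\<alpha> \<bullet> e" "\<beta> \<bullet> (x - a)" "\<beta> \<bullet> e" 0], of c2]]]
    by simp
qed

lemma G_in_S:
  assumes nc: "\<not> collinear {0, u, v}" and mn: "m + n \<le> Suc k"
  shows "G u v m n \<in> {trace_t a u v w | w. poly2 k (\<lambda>x. w x $ 1) \<and> poly2 k (\<lambda>x. w x $ 2)
                 \<and> (\<forall>x\<in>pgram a u v. curl_v w x = 0)}"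
proof -
  obtain \<alpha> \<beta> :: "real^2" where ab: "\<alpha> \<bullet> u = 1" "\<alpha> \<bullet> v = 0" "\<beta> \<bullet> u = 0" "\<beta> \<bullet> v = 1"
    using dual_basis[OF nc] by blast
  define \<phi> :: "(real \<times> nat \<times> nat) list" where "\<phi> = [(1, m, n)]"
  define w where "w y = evalL (dX \<phi>) (\<alpha> \<bullet> (y - a)) (\<beta> \<bullet> (y - a)) *\<^sub>R \<alpha> + evalL (dY \<phi>) (\<alpha> \<bullet> (y - a)) (\<beta> \<bullet> (y - a)) *\<^sub>R \<beta>" for y
  have st: "\<alpha> \<bullet> (a + \<sigma> *\<^sub>R u + \<tau> *\<^sub>R v - a) = \<sigma>" "\<beta> \<bullet> (a + \<sigma> *\<^sub>R u + \<tau> *\<^sub>R v - a) = \<tau>" for \<sigma> \<tau>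
    by (simp_all add: inner_add_right ab)
  have F: "\<forall>\<sigma>\<in>{0..1}. \<forall>\<tau>\<in>{0..1}. w (a + \<sigma> *\<^sub>R u + \<tau> *\<^sub>R v) \<bullet> u = evalL (dX \<phi>) \<sigma> \<tau>
              \<and> w (a + \<sigma> *\<^sub>R u + \<tau> *\<^sub>R v) \<bullet> v = evalL (dY \<phi>) \<sigma> \<tau>"
    unfolding w_def st by (simp add: inner_add_left ab)
  have tr: "trace_t a u v w = G u v m n" unfolding G_def \<phi>_def[symmetric] by (rule trace_mkT[OF nc F])
  have dg: "degL k (dX \<phi>)" "degL k (dY \<phi>)" using mn by (auto simp: \<phi>_def intro!: degL_dX degL_dY)
  have comp: "w y $ l = \<alpha>$l * evalL (dX \<phi>) (\<alpha> \<bullet> (y - a)) (\<beta> \<bullet> (y - a)) + \<beta>$l * evalL (dY \<phi>) (\<alpha> \<bullet> (y - a)) (\<beta> \<bullet> (y - a))" for y l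
    by (simp add: w_def mult.commute)
  have sxy: "\<gamma> \<bullet> (y - a) = (- (\<gamma>$1 * a$1) - \<gamma>$2 * a$2) + \<gamma>$1 * y$1 + \<gamma>$2 * y$2" for \<gamma> y :: "real^2"
    by (simp add: inner2 algebra_simps)
  have P: "poly2 k (\<lambda>y. w y $ l)" for l
  proof -
    let ?p = "\<lambda>x1 x2. (- (\<alpha>$1 * a$1) - \<alpha>$2 * a$2) + \<alpha>$1 * x1 + \<alpha>$2 * x2"
    let ?q = "\<lambda>x1 x2. (- (\<beta>$1 * a$1) - \<beta>$2 * a$2) + \<beta>$1 * x1 + \<beta>$2 * x2"
    have L: "LP k (\<lambda>x1 x2. \<alpha>$l * evalL (dX \<phi>) (?p x1 x2) (?q x1 x2) + \<beta>$l * evalL (dY \<phi>) (?p x1 x2) (?q x1 x2))"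
      by (intro LP_add LP_scale LP_subst[OF LP_evalL] LP_affine dg)
    have "(\<lambda>y. w y $ l) = (\<lambda>y. (\<lambda>x1 x2. \<alpha>$l * evalL (dX \<phi>) (?p x1 x2) (?q x1 x2) + \<beta>$l * evalL (dY \<phi>) (?p x1 x2) (?q x1 x2)) (y$1) (y$2))"
      unfolding comp sxy[of \<alpha>] sxy[of \<beta>] by simp
    then show ?thesis using LP_poly2[OF L] by simp
  qed
  have curl: "curl_v w x = 0" for x
  proof -
    define X where "X = \<alpha> \<bullet> (x - a)"
    define Y where "Y = \<beta> \<bullet> (x - a)"
    have ax: "\<gamma> \<bullet> axis 1 1 = \<gamma>$1" "\<gamma> \<bullet> axis 2 1 = \<gamma>$2" for \<gamma> :: "real^2" by (simp_all add: inner2 axis_comps)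
    have d2: "pdx (\<lambda>y. w y $ 2) x = \<alpha>$2 * ((\<alpha> \<bullet> axis 1 1) * evalL (dX (dX \<phi>)) X Y + (\<beta> \<bullet> axis 1 1) * evalL (dY (dX \<phi>)) X Y)
        + \<beta>$2 * ((\<alpha> \<bullet> axis 1 1) * evalL (dX (dY \<phi>)) X Y + (\<beta> \<bullet> axis 1 1) * evalL (dY (dY \<phi>)) X Y)"
      unfolding pdx_def X_def Y_def by (rule deriv_comb) (simp add: comp)
    have d1: "pdy (\<lambda>y. w y $ 1) x = \<alpha>$1 * ((\<alpha> \<bullet> axis 2 1) * evalL (dX (dX \<phi>)) X Y + (\<beta> \<bullet> axis 2 1) * evalL (dY (dX \<phi>)) X Y)
        + \<beta>$1 * ((\<alpha> \<bullet> axis 2 1) * evalL (dX (dY \<phi>)) X Y + (\<beta> \<bullet> axis 2 1) * evalL (dY (dY \<phi>)) X Y)"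
      unfolding pdy_def X_def Y_def by (rule deriv_comb) (simp add: comp)
    show ?thesis unfolding curl_v_def d1 d2 evalL_dXY ax by (simp add: algebra_simps)
  qed
  show ?thesis
    by (rule CollectI, rule exI[of _ w]) (use tr P curl in auto)
qed

lemma U1: fixes a :: "nat \<Rightarrow> real"
  assumes "\<forall>t\<in>{0..1}. (\<Sum>m\<le>N. a m * t^m) = 0" shows "\<forall>m\<le>N. a m = 0"
proof (rule ccontr)
  assume "\<not> (\<forall>m\<le>N. a m = 0)"
  then obtain m where "m \<le> N" "a m \<noteq> 0" by auto
  then have "finite {z. (\<Sum>i\<le>N. a i * z^i) = 0}" by (intro polyfun_roots_finite)
  moreover have "{0..1::real} \<subseteq> {z. (\<Sum>i\<le>N. a i * z^i) = 0}" using assms by auto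
  ultimately have "finite {0..1::real}" by (rule finite_subset[rotated])
  then show False using infinite_Icc[of "0::real" 1] by simp
qed

lemma U1L: fixes a :: "nat \<Rightarrow> real"
  assumes "\<forall>t\<in>{0..1}. (\<Sum>m<N. a m * t^m) = 0" shows "\<forall>m<N. a m = 0"
proof -
  define b where "b m = (if m < N then a m else 0)" for m
  have "(\<Sum>m\<le>N. b m * t^m) = (\<Sum>m<N. a m * t^m)" for t :: real
    by (simp add: b_def lessThan_Suc_atMost[symmetric])
  then have B: "\<forall>m\<le>N. b m = 0" using assms by (intro U1) auto
  show ?thesis
  proof (intro allI impI)
    fix m assume m: "m < N"
    then show "a m = 0" using B[rule_format, of m] by (simp add: b_def)
  qed
qed

lemma U1R: fixes a :: "nat \<Rightarrow> real"
  assumes "\<forall>t\<in>{0..1}. (\<Sum>m<N. a m * (1 - t)^m) = 0" shows "\<forall>m<N. a m = 0"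
proof -
  have "\<forall>t\<in>{0..1}. (\<Sum>m<N. a m * t^m) = 0"
  proof
    fix t :: real assume "t \<in> {0..1}"
    then have "1 - t \<in> {0..1}" by auto
    then show "(\<Sum>m<N. a m * t^m) = 0" using assms by fastforce
  qed
  then show ?thesis by (rule U1L)
qed

lemma U4: fixes d :: "nat \<Rightarrow> real"
  assumes k: "1 \<le> k" and h: "\<forall>t\<in>{0..1}. C + (\<Sum>m\<in>{1..<k}. d m * t^m) = 0"
  shows "\<forall>m\<in>{1..<k}. d m = 0"
proof -
  define b where "b m = (if m = 0 then C else d m)" for m
  have s: "{..<k} = insert 0 {1..<k}" using k by auto
  have "(\<Sum>m<k. b m * t^m) = C + (\<Sum>m\<in>{1..<k}. d m * t^m)" for t :: real
    unfolding s by (simp add: b_def)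
  then have "\<forall>m<k. b m = 0" using h by (intro U1L) auto
  then show ?thesis by (auto simp: b_def)
qed

definition ekind :: "nat \<times> nat \<Rightarrow> nat \<times> nat" where
  "ekind x = (if fst x = 0 then (Suc (snd x), 0) else if fst x = 1 then (0, Suc (snd x))
     else if fst x = 2 then (Suc (snd x), 1) else (1, Suc (snd x)))"

definition Bf :: "real^2 \<Rightarrow> real^2 \<Rightarrow> nat \<times> nat \<Rightarrow> bfield" where
  "Bf u v x = G u v (fst (ekind x)) (snd (ekind x))"

definition Iset :: "nat \<Rightarrow> (nat \<times> nat) set" where
  "Iset k = Pair 0 ` {..k} \<union> Pair 1 ` {..k} \<union> Pair 2 ` {..<k} \<union> Pair 3 ` {1..<k}"

lemma finite_Iset: "finite (Iset k)" by (simp add: Iset_def)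

lemma sum_Iset: "(\<Sum>x\<in>Iset k. F x) = (\<Sum>m\<le>k. F (0,m)) + (\<Sum>m\<le>k. F (1,m)) + (\<Sum>m<k. F (2,m)) + (\<Sum>m\<in>{1..<k}. F (3,m))"
proof -
  have inj: "inj_on (Pair c) A" for c :: nat and A :: "nat set" by (simp add: inj_on_def)
  have r: "sum F (Pair c ` A) = (\<Sum>m\<in>A. F (c, m))" for c A
    using sum.reindex[OF inj, of F] by (simp add: comp_def)
  show ?thesis unfolding Iset_def
    by (subst sum.union_disjoint, force, force, force)+ (simp add: r)
qed

lemma card_Iset: "1 \<le> k \<Longrightarrow> card (Iset k) = 4 * k + 1"
  using sum_Iset[where k=k and F="\<lambda>_. 1::nat"] by (simp add: card_eq_sum[symmetric])

lemma sum_mkT: "finite X \<Longrightarrow> (\<Sum>x\<in>X. bscale (c x) (mkT u v (f x))) = mkT u v (\<lambda>i t. \<Sum>x\<in>X. c x * f x i t)"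
proof (induction X rule: finite_induct)
  case empty then show ?case using mkT_zero by simp
next
  case (insert y X)
  then show ?case using mkT_lin[of u v "c y" "f y" "\<lambda>i t. \<Sum>x\<in>X. c x * f x i t"] by simp
qed

lemma Tv_nz: assumes nc: "\<not> collinear {0, u, v}" shows "Tv u v i \<noteq> 0"
  using dvec_nz[OF nc, of i] by (simp add: Tv_def)

lemma mkT_zeroD: assumes nc: "\<not> collinear {0, u, v}" and "mkT u v g = 0" "i < 4" "t \<in> {0..1}"
  shows "g i t = 0"
proof -
  have "mkT u v g i t = 0" using assms(2) by simp
  then have "g i t *\<^sub>R Tv u v i = 0" using assms(3,4) by (simp add: mkT_def on_bdry_def)
  then show ?thesis using Tv_nz[OF nc] by simp
qed

lemma bd1: "bd [(1,m,n)] 0 t = real m * t^(m-1) * 0^n"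
  "bd [(1,m,n)] 1 t = real n * t^(n-1)"
  "bd [(1,m,n)] 2 t = real m * (1-t)^(m-1)"
  "bd [(1,m,n)] 3 t = real n * 0^m * (1-t)^(n-1)"
  "bd [(1,m,n)] (Suc 0) t = real n * t^(n-1)"
  by (simp_all add: bd_def del: dX_simps(2) dY_simps(2))

lemma indep_B:
  assumes nc: "\<not> collinear {0, u, v}" and k: "1 \<le> k"
    and z: "(\<Sum>x\<in>Iset k. bscale (c x) (Bf u v x)) = 0"
  shows "\<forall>x\<in>Iset k. c x = 0"
proof -
  let ?g = "\<lambda>i t. \<Sum>x\<in>Iset k. c x * bd [(1, fst (ekind x), snd (ekind x))] i t"
  have "mkT u v ?g = 0" using z unfolding Bf_def G_def by (simp add: sum_mkT finite_Iset)
  then have E: "?g i t = 0" if "i < 4" "t \<in> {0..1}" for i t using mkT_zeroD[OF nc] that by blast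
  have e0: "\<forall>t\<in>{0..1}. (\<Sum>m\<le>k. (c (0,m) * real (Suc m)) * t^m) = 0"
  proof
    fix t :: real assume t: "t \<in> {0..1}"
    show "(\<Sum>m\<le>k. (c (0,m) * real (Suc m)) * t^m) = 0" using E[OF _ t, of 0]
      by (simp add: sum_Iset ekind_def bd1 algebra_simps)
  qed
  have c0: "c (0,m) = 0" if "m \<le> k" for m using U1[OF e0] that by auto
  have e3: "\<forall>t\<in>{0..1}. (\<Sum>m<Suc k. (c (1,m) * real (Suc m)) * (1-t)^m) = 0"
  proof
    fix t :: real assume t: "t \<in> {0..1}"
    show "(\<Sum>m<Suc k. (c (1,m) * real (Suc m)) * (1-t)^m) = 0" using E[OF _ t, of 3]
      by (simp add: sum_Iset ekind_def bd1 algebra_simps lessThan_Suc_atMost)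
  qed
  have c1: "c (1,m) = 0" if "m \<le> k" for m using U1R[OF e3] that by auto
  have e1: "\<forall>t\<in>{0..1}. (\<Sum>m<k. c (2,m)) + (\<Sum>m\<in>{1..<k}. (c (3,m) * real (Suc m)) * t^m) = 0"
  proof
    fix t :: real assume t: "t \<in> {0..1}"
    have z: "(\<Sum>m\<le>k. c (1, m) * bd [(1, 0, Suc m)] 1 t) = 0" by (rule sum.neutral) (use c1 in auto)
    show "(\<Sum>m<k. c (2,m)) + (\<Sum>m\<in>{1..<k}. (c (3,m) * real (Suc m)) * t^m) = 0" using E[OF _ t, of 1] z
      by (simp add: sum_Iset ekind_def bd1 algebra_simps)
  qed
  have c3: "c (3,m) = 0" if "m \<in> {1..<k}" for m using U4[OF k e1] that by auto
  have e2: "\<forall>t\<in>{0..1}. (\<Sum>m<k. (c (2,m) * real (Suc m)) * (1-t)^m) = 0"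
  proof
    fix t :: real assume t: "t \<in> {0..1}"
    have z0: "(\<Sum>m\<le>k. c (0, m) * bd [(1, Suc m, 0)] 2 t) = 0" by (rule sum.neutral) (use c0 in auto)
    have z3: "(\<Sum>m\<in>{1..<k}. c (3, m) * bd [(1, 1, Suc m)] 2 t) = 0" by (rule sum.neutral) (use c3 in auto)
    show "(\<Sum>m<k. (c (2,m) * real (Suc m)) * (1-t)^m) = 0" using E[OF _ t, of 2] z0 z3
      by (simp add: sum_Iset ekind_def bd1 algebra_simps)
  qed
  have c2: "c (2,m) = 0" if "m < k" for m using U1R[OF e2] that by auto
  show ?thesis using c0 c1 c2 c3 unfolding Iset_def by auto
qed

lemma indep_family:
  assumes fin: "finite I" and h: "\<And>c. (\<Sum>x\<in>I. bscale (c x) (f x)) = 0 \<Longrightarrow> \<forall>x\<in>I. c x = 0"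
  shows "bv.independent (f ` I) \<and> card (f ` I) = card I"
proof -
  have inj: "inj_on f I"
  proof (rule inj_onI, rule ccontr)
    fix x y assume xy: "x \<in> I" "y \<in> I" "f x = f y" "x \<noteq> y"
    define c where "c z = (if z = x then 1 else if z = y then -1 else (0::real))" for z
    have t: "bscale (c z) (f z) = (if z = x then f x else 0) - (if z = y then f y else 0)" for z
      using xy by (auto simp: c_def bv.scale_minus_left)
    have "(\<Sum>z\<in>I. bscale (c z) (f z)) = f x - f y"
      unfolding t using fin xy by (simp add: sum_subtractf sum.delta')
    then have "(\<Sum>z\<in>I. bscale (c z) (f z)) = 0" using xy by simp
    then have "c x = 0" using h xy by blast
    then show False by (simp add: c_def)
  qed
  have "bv.independent (f ` I)"
  proof (rule bv.independent_if_scalars_zero)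
    show "finite (f ` I)" using fin by simp
    fix g v assume s: "(\<Sum>v\<in>f ` I. bscale (g v) v) = 0" and v: "v \<in> f ` I"
    have "(\<Sum>x\<in>I. bscale (g (f x)) (f x)) = 0" using s sum.reindex[OF inj, of "\<lambda>v. bscale (g v) v"] by simp
    then have "\<forall>x\<in>I. g (f x) = 0" using h[of "\<lambda>x. g (f x)"] by blast
    then show "g v = 0" using v by auto
  qed
  then show ?thesis using card_image[OF inj] by simp
qed

lemma bd_split: assumes "1 \<le> m" "1 \<le> n"
  shows "bd [(1,m,n)] i t = bd [(1,m,1)] i t + bd [(1,1,n)] i t - bd [(1,1,1)] i t"
  using assms by (simp add: bd_def power_0_left del: dX_simps(2) dY_simps(2))

lemma G_split: assumes "1 \<le> m" "1 \<le> n"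
  shows "G u v m n = G u v m 1 + G u v 1 n - G u v 1 1"
  using assms by (simp add: fun_eq_iff G_def mkT_def bd_split[OF assms] scaleR_add_left scaleR_diff_left)

lemma G00: "G u v 0 0 = 0"
proof -
  have "bd [(1,0,0)] = (\<lambda>i t. 0)" by (simp add: fun_eq_iff bd_def)
  then show ?thesis unfolding G_def using mkT_zero by simp
qed

lemma G_span_B: assumes k: "1 \<le> k" and mn: "m + n \<le> Suc k"
  shows "G u v m n \<in> bv.span (Bf u v ` Iset k)"
proof -
  have inB: "Bf u v x \<in> bv.span (Bf u v ` Iset k)" if "x \<in> Iset k" for x
    using that by (intro bv.span_base) auto
  have G1: "G u v m' 1 \<in> bv.span (Bf u v ` Iset k)" if "1 \<le> m'" "m' \<le> k" for m'
  proof -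
    have "G u v m' 1 = Bf u v (2, m' - 1)" using that by (simp add: Bf_def ekind_def)
    moreover have "(2, m' - 1) \<in> Iset k" using that unfolding Iset_def by auto
    ultimately show ?thesis using inB by simp
  qed
  have G1n: "G u v 1 n' \<in> bv.span (Bf u v ` Iset k)" if "1 \<le> n'" "n' \<le> k" for n'
  proof (cases "n' = 1")
    case True then show ?thesis using G1[of 1] k by simp
  next
    case False
    have "G u v 1 n' = Bf u v (3, n' - 1)" using that by (simp add: Bf_def ekind_def)
    moreover have "(3, n' - 1) \<in> Iset k"
    proof -
      have "n' - 1 \<in> {1..<k}" using that False by auto
      then show ?thesis unfolding Iset_def by blast
    qed
    ultimately show ?thesis using inB by simp
  qed
  show ?thesis
  proof (cases "m = 0")
    case m0: True
    show ?thesis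
    proof (cases "n = 0")
      case True then show ?thesis using m0 G00 bv.span_zero by simp
    next
      case False
      have "G u v m n = Bf u v (1, n - 1)" using m0 False by (simp add: Bf_def ekind_def)
      moreover have "(1, n - 1) \<in> Iset k" using mn m0 unfolding Iset_def by auto
      ultimately show ?thesis using inB by simp
    qed
  next
    case m1: False
    show ?thesis
    proof (cases "n = 0")
      case True
      have "G u v m n = Bf u v (0, m - 1)" using m1 True by (simp add: Bf_def ekind_def)
      moreover have "(0, m - 1) \<in> Iset k" using mn unfolding Iset_def by auto
      ultimately show ?thesis using inB by simp
    next
      case False
      have "G u v m n = G u v m 1 + G u v 1 n - G u v 1 1" using m1 False by (intro G_split) auto
      moreover have "G u v m 1 \<in> bv.span (Bf u v ` Iset k)" using m1 False mn by (intro G1) auto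
      moreover have "G u v 1 n \<in> bv.span (Bf u v ` Iset k)" using m1 False mn by (intro G1n) auto
      moreover have "G u v 1 1 \<in> bv.span (Bf u v ` Iset k)" using k by (intro G1) auto
      ultimately show ?thesis by (simp add: bv.span_add bv.span_diff)
    qed
  qed
qed

lemma dim_tang:
  assumes nc: "\<not> collinear {0, u, v}" and k: "1 \<le> k"
  shows "bdim {trace_t a u v w | w. poly2 k (\<lambda>x. w x $ 1) \<and> poly2 k (\<lambda>x. w x $ 2)
                 \<and> (\<forall>x\<in>pgram a u v. curl_v w x = 0)} = 4 * k + 1"
proof -
  let ?S = "{trace_t a u v w | w. poly2 k (\<lambda>x. w x $ 1) \<and> poly2 k (\<lambda>x. w x $ 2)
                 \<and> (\<forall>x\<in>pgram a u v. curl_v w x = 0)}"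
  let ?B = "Bf u v ` Iset k"
  have ind: "bv.independent ?B \<and> card ?B = card (Iset k)"
    by (rule indep_family[OF finite_Iset]) (rule indep_B[OF nc k])
  have BS: "?B \<subseteq> ?S"
  proof
    fix b assume "b \<in> ?B"
    then obtain x where x: "x \<in> Iset k" "b = Bf u v x" by auto
    have "fst (ekind x) + snd (ekind x) \<le> Suc k" using x(1) unfolding Iset_def ekind_def by auto
    then show "b \<in> ?S" unfolding x(2) Bf_def by (rule G_in_S[OF nc])
  qed
  have GB: "{G u v m n | m n. m + n \<le> Suc k} \<subseteq> bv.span ?B"
  proof
    fix g assume "g \<in> {G u v m n | m n. m + n \<le> Suc k}"
    then obtain m n where "g = G u v m n" "m + n \<le> Suc k" by blast
    then show "g \<in> bv.span ?B" using G_span_B[OF k] by simp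
  qed
  have SB: "?S \<subseteq> bv.span ?B"
  proof
    fix s assume "s \<in> ?S"
    then obtain w where w: "s = trace_t a u v w" "poly2 k (\<lambda>x. w x $ 1)" "poly2 k (\<lambda>x. w x $ 2)"
      "\<forall>x\<in>pgram a u v. curl_v w x = 0" by blast
    obtain \<Phi> where \<Phi>: "degL (Suc k) \<Phi>" "\<forall>\<sigma>\<in>{0..1}. \<forall>\<tau>\<in>{0..1}.
     w (a + \<sigma> *\<^sub>R u + \<tau> *\<^sub>R v) \<bullet> u = evalL (dX \<Phi>) \<sigma> \<tau> \<and> w (a + \<sigma> *\<^sub>R u + \<tau> *\<^sub>R v) \<bullet> v = evalL (dY \<Phi>) \<sigma> \<tau>"
      using potential[OF w(2,3,4)] by blast
    have "s = mkT u v (bd \<Phi>)" using trace_mkT[OF nc \<Phi>(2)] w(1) by simp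
    also have "\<dots> \<in> bv.span {G u v m n | m n. m + n \<le> Suc k}" by (rule mkT_span[OF \<Phi>(1)])
    also have "\<dots> \<subseteq> bv.span ?B" using bv.span_minimal[OF GB bv.subspace_span] .
    finally show "s \<in> bv.span ?B" .
  qed
  have BsS: "?B \<subseteq> bv.span ?S" by (rule subset_trans[OF BS bv.span_superset])
  have "bv.span ?B = bv.span ?S" by (rule bv.span_eq[THEN iffD2, OF conjI[OF BsS SB]])
  then have d: "bv.dim ?S = card ?B" using ind by (intro bv.dim_eq_card) auto
  have "card ?B = 4 * k + 1" using ind card_Iset[OF k] by simp
  then show ?thesis unfolding bdim_def d .
qed

lemma ncross_scale: "ncross_s n c = c *\<^sub>R ncross_s n 1"
  by (simp add: ncross_s_def vec2_eq)

lemma dim_scal: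
  assumes nc: "\<not> collinear {0, u, v}"
  shows "bdim {trace_s a u v p | p. poly2 k p \<and> (\<forall>x\<in>pgram a u v. curl_s p x = 0)} = 1"
proof -
  let ?S = "{trace_s a u v p | p. poly2 k p \<and> (\<forall>x\<in>pgram a u v. curl_s p x = 0)}"
  let ?b = "trace_s a u v (\<lambda>_. 1)"
  have one: "\<And>x::real^2. (\<lambda>_. 1::real) x = evalL [(1,0,0)] (x$1) (x$2)" by simp
  have p1: "poly2 k (\<lambda>_. 1::real)" using LP_poly2[OF LP_const[of k 1]] by simp
  have c1: "curl_s (\<lambda>_. 1) x = 0" for x
    unfolding curl_s_def pdx_evalL[OF one] pdy_evalL[OF one] by (simp add: vec2_eq)
  have bS: "?b \<in> ?S"
    by (rule CollectI, rule exI[of _ "\<lambda>_. 1"]) (use p1 c1 in auto)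
  have Sb: "?S \<subseteq> bv.span {?b}"
  proof
    fix s assume sS: "s \<in> ?S"
    have "\<exists>p. s = trace_s a u v p \<and> poly2 k p \<and> (\<forall>x\<in>pgram a u v. curl_s p x = 0)"
      using sS by (simp only: mem_Collect_eq)
    then obtain p where p: "s = trace_s a u v p" "poly2 k p" "\<forall>x\<in>pgram a u v. curl_s p x = 0"
      by (elim exE conjE)
    have ev: "trace_s a u v p i t = bscale (p a) ?b i t" for i t
    proof (cases "on_bdry i t")
      case True
      then have "pg_edge a u v i t \<in> pgram a u v" by (intro edge_in_pgram) (auto simp: on_bdry_def)
      then have e1: "p (pg_edge a u v i t) = p a" by (rule curl_s_const[OF p(2,3)])
      have e2: "ncross_s (pg_normal a u v i) (p a) = p a *\<^sub>R ncross_s (pg_normal a u v i) 1"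
        by (rule ncross_scale)
      show ?thesis unfolding trace_s_def bscale_def using True by (simp only: if_True e1 e2)
    next
      case False
      then show ?thesis unfolding trace_s_def bscale_def by simp
    qed
    have "s = bscale (p a) ?b" unfolding p(1) by (intro ext ev)
    then show "s \<in> bv.span {?b}" by (metis bv.span_scale bv.span_base singletonI)
  qed
  have b0: "?b \<noteq> 0"
  proof
    assume "?b = 0"
    then have "?b 0 0 = 0" by simp
    then have "ncross_s (pg_normal a u v 0) 1 = 0" by (simp add: trace_s_def on_bdry_def)
    moreover have "norm (pg_normal a u v 0) = 1" using pg_normal_props[OF nc, of 0] by simp
    ultimately show False by (simp add: ncross_s_def vec2_eq norm2)
  qed
  have ind: "bv.independent {?b}" using b0 by (simp add: bv.independent_insert)
  have bsS: "{?b} \<subseteq> bv.span ?S" using bv.span_base[OF bS] by simp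
  have "bv.span {?b} = bv.span ?S" by (rule bv.span_eq[THEN iffD2, OF conjI[OF bsS Sb]])
  then have d: "bv.dim ?S = card {?b}" using ind by (intro bv.dim_eq_card) auto
  show ?thesis unfolding bdim_def d by simp
qed

definition Nv :: "real^2 \<Rightarrow> real^2 \<Rightarrow> real^2 \<Rightarrow> nat \<Rightarrow> real^2" where
  "Nv a u v i = ncross_s (pg_normal a u v i) 1"
definition mkN :: "real^2 \<Rightarrow> real^2 \<Rightarrow> real^2 \<Rightarrow> (nat \<Rightarrow> real \<Rightarrow> real) \<Rightarrow> bfield" where
  "mkN a u v f = (\<lambda>i t. if on_bdry i t then f i t *\<^sub>R Nv a u v i else 0)"
definition Ef :: "real^2 \<Rightarrow> real^2 \<Rightarrow> real^2 \<Rightarrow> nat \<times> nat \<Rightarrow> bfield" where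
  "Ef a u v x = mkN a u v (\<lambda>i t. if i = fst x then t ^ snd x else 0)"

lemma mkN_lin: "mkN a u v (\<lambda>i t. c * f i t + g i t) = bscale c (mkN a u v f) + mkN a u v g"
  by (simp add: fun_eq_iff mkN_def bscale_def scaleR_add_left)
lemma mkN_zero: "mkN a u v (\<lambda>i t. 0) = 0"
  by (simp add: fun_eq_iff mkN_def)
lemma sum_mkN: "finite X \<Longrightarrow> (\<Sum>x\<in>X. bscale (c x) (mkN a u v (f x))) = mkN a u v (\<lambda>i t. \<Sum>x\<in>X. c x * f x i t)"
proof (induction X rule: finite_induct)
  case empty then show ?case using mkN_zero by simp
next
  case (insert y X)
  then show ?case using mkN_lin[of a u v "c y" "f y" "\<lambda>i t. \<Sum>x\<in>X. c x * f x i t"] by simp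
qed

lemma Nv_nz: assumes nc: "\<not> collinear {0, u, v}" and i: "i < 4" shows "Nv a u v i \<noteq> 0"
proof
  assume "Nv a u v i = 0"
  moreover have "norm (pg_normal a u v i) = 1" using pg_normal_props[OF nc i] by simp
  ultimately show False by (simp add: Nv_def ncross_s_def vec2_eq norm2)
qed

lemma mkN_zeroD: assumes nc: "\<not> collinear {0, u, v}" and "mkN a u v g = 0" "i < 4" "t \<in> {0..1}"
  shows "g i t = 0"
proof -
  have "mkN a u v g i t = 0" using assms(2) by simp
  then have "g i t *\<^sub>R Nv a u v i = 0" using assms(3,4) by (simp add: mkN_def on_bdry_def)
  then show ?thesis using Nv_nz[OF nc assms(3)] by simp
qed

definition Jset :: "nat \<Rightarrow> (nat \<times> nat) set" where "Jset k = {..<4} \<times> {..k}"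

lemma sum_J: fixes c :: "nat \<times> nat \<Rightarrow> real" and t :: real assumes "i < 4"
  shows "(\<Sum>x\<in>Jset k. c x * (if i = fst x then t ^ snd x else 0)) = (\<Sum>m\<le>k. c (i,m) * t^m)"
proof -
  have "(\<Sum>x\<in>Jset k. c x * (if i = fst x then t ^ snd x else 0))
      = (\<Sum>a<4. \<Sum>b\<le>k. c (a,b) * (if i = a then t ^ b else 0))"
    unfolding Jset_def by (simp add: sum.cartesian_product split_def)
  also have "\<dots> = (\<Sum>a<4. if i = a then (\<Sum>b\<le>k. c (a,b) * t ^ b) else 0)"
    by (intro sum.cong) auto
  also have "\<dots> = (\<Sum>m\<le>k. c (i,m) * t^m)" using assms by (simp add: sum.delta)
  finally show ?thesis .
qed

lemma poly_k: fixes q :: "real poly" assumes "degree q \<le> k" shows "poly q t = (\<Sum>m\<le>k. coeff q m * t^m)"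
proof -
  have "poly q t = (\<Sum>m\<le>degree q. coeff q m * t^m)" by (rule poly_altdef)
  also have "\<dots> = (\<Sum>m\<le>k. coeff q m * t^m)"
    using assms by (intro sum.mono_neutral_left) (auto simp: coeff_eq_0)
  finally show ?thesis .
qed

lemma Ef_in_M: assumes "x \<in> Jset k" shows "Ef a u v x \<in> Mspace k a u v"
  unfolding Mspace_def
proof (intro CollectI conjI allI impI)
  fix i t assume "\<not> on_bdry i t" then show "Ef a u v x i t = 0" by (simp add: Ef_def mkN_def)
next
  fix i :: nat assume i: "i < 4"
  let ?q = "if i = fst x then monom (1::real) (snd x) else 0"
  have dq: "degree ?q \<le> k" using assms by (auto simp: Jset_def degree_monom_eq)
  have "\<forall>t\<in>{0..1}. Ef a u v x i t = ncross_s (pg_normal a u v i) (poly ?q t)"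
  proof
    fix t :: real assume t: "t \<in> {0..1}"
    have "ncross_s (pg_normal a u v i) (poly ?q t) = poly ?q t *\<^sub>R Nv a u v i"
      unfolding Nv_def by (rule ncross_scale)
    then show "Ef a u v x i t = ncross_s (pg_normal a u v i) (poly ?q t)"
      using i t by (simp add: Ef_def mkN_def on_bdry_def poly_monom)
  qed
  then show "\<exists>q. degree q \<le> k \<and> (\<forall>t\<in>{0..1}. Ef a u v x i t = ncross_s (pg_normal a u v i) (poly q t))"
    using dq by blast
qed

lemma M_span: "Mspace k a u v \<subseteq> bv.span (Ef a u v ` Jset k)"
proof
  fix mu assume mu: "mu \<in> Mspace k a u v"
  then have off: "\<forall>i t. \<not> on_bdry i t \<longrightarrow> mu i t = 0"
    and on: "\<forall>i. \<exists>q. i < 4 \<longrightarrow> degree q \<le> k \<and> (\<forall>t\<in>{0..1}. mu i t = ncross_s (pg_normal a u v i) (poly q t))"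
    unfolding Mspace_def by auto
  obtain Q where Q: "\<forall>i. i < 4 \<longrightarrow> degree (Q i) \<le> k \<and> (\<forall>t\<in>{0..1}. mu i t = ncross_s (pg_normal a u v i) (poly (Q i) t))"
    using choice[OF on] by blast
  let ?c = "\<lambda>x. coeff (Q (fst x)) (snd x)"
  have "mu = mkN a u v (\<lambda>i t. \<Sum>x\<in>Jset k. ?c x * (if i = fst x then t ^ snd x else 0))"
  proof (intro ext)
    fix i t
    show "mu i t = mkN a u v (\<lambda>i t. \<Sum>x\<in>Jset k. ?c x * (if i = fst x then t ^ snd x else 0)) i t"
    proof (cases "on_bdry i t")
      case True
      then have i: "i < 4" and t: "t \<in> {0..1}" by (auto simp: on_bdry_def)
      have m1: "mu i t = ncross_s (pg_normal a u v i) (poly (Q i) t)" using Q i t by blast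
      have m2: "ncross_s (pg_normal a u v i) (poly (Q i) t) = poly (Q i) t *\<^sub>R Nv a u v i"
        unfolding Nv_def by (rule ncross_scale)
      have m3: "poly (Q i) t = (\<Sum>m\<le>k. coeff (Q i) m * t^m)" using Q i by (intro poly_k) blast
      have m4: "(\<Sum>x\<in>Jset k. ?c x * (if i = fst x then t ^ snd x else 0)) = (\<Sum>m\<le>k. coeff (Q i) m * t^m)"
        using sum_J[OF i, where c="?c" and k=k and t=t] by simp
      show ?thesis unfolding mkN_def using True by (simp only: if_True m1 m2 m4) (simp only: m3)
    next
      case False then show ?thesis using off by (simp add: mkN_def)
    qed
  qed
  also have "\<dots> = (\<Sum>x\<in>Jset k. bscale (?c x) (Ef a u v x))"
    unfolding Ef_def by (rule sum_mkN[symmetric]) (simp add: Jset_def)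
  also have "\<dots> \<in> bv.span (Ef a u v ` Jset k)"
    by (intro bv.span_sum bv.span_scale bv.span_base) auto
  finally show "mu \<in> bv.span (Ef a u v ` Jset k)" .
qed

lemma dim_M: assumes nc: "\<not> collinear {0, u, v}" shows "bdim (Mspace k a u v) = 4 * (k + 1)"
proof -
  let ?B = "Ef a u v ` Jset k"
  have fin: "finite (Jset k)" by (simp add: Jset_def)
  have ind: "bv.independent ?B \<and> card ?B = card (Jset k)"
  proof (rule indep_family[OF fin])
    fix c assume z: "(\<Sum>x\<in>Jset k. bscale (c x) (Ef a u v x)) = 0"
    then have mk: "mkN a u v (\<lambda>i t. \<Sum>x\<in>Jset k. c x * (if i = fst x then t ^ snd x else 0)) = 0"
      unfolding Ef_def using sum_mkN[OF fin] by simp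
    have E: "(\<Sum>m\<le>k. c (i,m) * t^m) = 0" if "i < 4" "t \<in> {0..1}" for i t
    proof -
      have "(\<Sum>x\<in>Jset k. c x * (if i = fst x then t ^ snd x else 0)) = 0"
        by (rule mkN_zeroD[OF nc mk that])
      then show ?thesis using sum_J[OF that(1), where c=c and k=k and t=t] by simp
    qed
    show "\<forall>x\<in>Jset k. c x = 0"
    proof
      fix x assume x: "x \<in> Jset k"
      then have "fst x < 4" "snd x \<le> k" by (auto simp: Jset_def)
      then have "\<forall>m\<le>k. c (fst x, m) = 0" using E by (intro U1) auto
      then show "c x = 0" using \<open>snd x \<le> k\<close> by (metis prod.collapse)
    qed
  qed
  have BM: "?B \<subseteq> Mspace k a u v" using Ef_in_M by blast
  have BsM: "?B \<subseteq> bv.span (Mspace k a u v)" by (rule subset_trans[OF BM bv.span_superset])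
  have "bv.span ?B = bv.span (Mspace k a u v)" by (rule bv.span_eq[THEN iffD2, OF conjI[OF BsM M_span]])
  then have d: "bv.dim (Mspace k a u v) = card ?B" using ind by (intro bv.dim_eq_card) auto
  have "card (Jset k) = 4 * (k + 1)" by (simp add: Jset_def card_cartesian_product)
  then show ?thesis unfolding bdim_def d using ind by simp
qed

theorem lemma5p5:
  fixes a u v :: "real^2" and k :: nat
  assumes "k \<ge> 1"
    and "\<not> collinear {0, u, v}"
  shows "I_M k a u v = 2"
proof -
  have "I_M k a u v = int (4 * (k + 1)) - int 1 - int (4 * k + 1)"
    unfolding I_M_def dim_M[OF assms(2)] dim_scal[OF assms(2)] dim_tang[OF assms(2,1)] ..
  then show ?thesis by simp
qed

end
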